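(* Let $\lambda\in\mathbb{R}$, $\eta\le1$. Let $\theta_k,z_k\in\mathbb{R}^d$ with $\|e_k\|\le(1-\eta)\|z_k\|$ where $e_k=z_k-\nabla f(\theta_k)$; let $\alpha_k\in\mathbb{R}$, $\theta_{k+1}=\theta_k-\alpha_kz_k$, $\epsilon_k,\epsilon_{k+1}\ge0$, and $\tilde{x}(\theta_k),\tilde{x}(\theta_{k+1})\in\mathbb{R}^n$ with $\|\tilde{x}(\theta_j)-\hat{x}(\theta_j)\|\le\epsilon_j$ for $j=k,k+1$. Set $w_k=\|\nabla g(\tilde{x}(\theta_k))\|+\|\nabla g(\tilde{x}(\theta_{k+1}))\|$, $\bar{\epsilon}_k=\max\{\epsilon_k,\epsilon_{k+1}\}$ and $$\phi(\alpha_k)=2w_k\bar{\epsilon}_k+2L_{\nabla g}\bar{\epsilon}_k^2+\Big(\alpha_k^2\frac{L_{\nabla f}}{2}+(\lambda-\eta)\alpha_k\Big)\|z_k\|^2.$$ Then $\psi(\alpha_k)\le\phi(\alpha_k)$, where $\psi(\alpha_k)=\overline{U}(\tilde{x}(\theta_{k+1}),\epsilon_{k+1})-\underline{U}(\tilde{x}(\theta_k),\epsilon_k)+\lambda\alpha_k\|z_k\|^2$.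
   Context: $g:\mathbb{R}^n\to\mathbb{R}$ is continuously differentiable with $L_{\nabla g}$-Lipschitz gradient; $\hat{x}(\theta)=\arg\min_xh(x,\theta)$ for a lower-level function $h:\mathbb{R}^n\times\mathbb{R}^d\to\mathbb{R}$ strongly convex in $x$; $f(\theta)=g(\hat{x}(\theta))$ is continuously differentiable with $L_{\nabla f}$-Lipschitz gradient. $\overline{U}(x,\epsilon)=g(x)+\|\nabla g(x)\|\epsilon+\frac{L_{\nabla g}}{2}\epsilon^2$, $\underline{U}(x,\epsilon)=g(x)-\|\nabla g(x)\|\epsilon-\frac{L_{\nabla g}}{2}\epsilon^2$. Norm is Euclidean. *)

theory Defs
  imports "HOL-Analysis.Analysis"
begin

definition strongly_convex :: "('a::real_normed_vector \<Rightarrow> real) \<Rightarrow> bool" where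
  "strongly_convex \<phi> \<longleftrightarrow> (\<exists>\<mu>>0. \<forall>x y. \<forall>t::real. 0 \<le> t \<and> t \<le> 1 \<longrightarrow>
      \<phi> (t *\<^sub>R x + (1 - t) *\<^sub>R y) \<le> t * \<phi> x + (1 - t) * \<phi> y - \<mu> / 2 * t * (1 - t) * (norm (x - y))\<^sup>2)"

text \<open>Upper and lower bounds U-bar and U-underbar; G is the gradient of g, L its Lipschitz constant.\<close>
definition Ubar :: "('a \<Rightarrow> real) \<Rightarrow> ('a \<Rightarrow> 'a::real_normed_vector) \<Rightarrow> real \<Rightarrow> 'a \<Rightarrow> real \<Rightarrow> real" where
  "Ubar g G L x \<epsilon> = g x + norm (G x) * \<epsilon> + L / 2 * \<epsilon>\<^sup>2"

definition Ulow :: "('a \<Rightarrow> real) \<Rightarrow> ('a \<Rightarrow> 'a::real_normed_vector) \<Rightarrow> real \<Rightarrow> 'a \<Rightarrow> real \<Rightarrow> real" where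
  "Ulow g G L x \<epsilon> = g x - norm (G x) * \<epsilon> - L / 2 * \<epsilon>\<^sup>2"

end

theory Submission
  imports Defs "HOL-Analysis.Analysis"
begin

lemma descent:
  fixes g :: "'a::real_inner \<Rightarrow> real" and G :: "'a \<Rightarrow> 'a"
  assumes gd: "\<And>x. (g has_derivative (\<lambda>v. G x \<bullet> v)) (at x)"
    and lip: "L-lipschitz_on UNIV G"
  shows "\<bar>g y - g x - G x \<bullet> (y - x)\<bar> \<le> L/2 * (norm (y-x))\<^sup>2"
proof -
  define d where "d = y - x"
  have L0: "0 \<le> L" using lipschitz_on_nonneg[OF lip] .
  have D: "((\<lambda>t. g (x + t *\<^sub>R d)) has_real_derivative (G (x + t *\<^sub>R d) \<bullet> d)) (at t)" for t
  proof -
    have "((\<lambda>t. x + t *\<^sub>R d) has_derivative (\<lambda>s. s *\<^sub>R d)) (at t)"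
      by (auto intro!: derivative_eq_intros)
    from has_derivative_compose[OF this gd]
    have "((\<lambda>t. g (x + t *\<^sub>R d)) has_derivative (\<lambda>s. G (x + t *\<^sub>R d) \<bullet> (s *\<^sub>R d))) (at t)" .
    then show ?thesis unfolding has_field_derivative_def
      by (simp add: mult.commute[of _ "G (x + t *\<^sub>R d) \<bullet> d"])
  qed
  have B: "\<bar>(G (x + t *\<^sub>R d) - G x) \<bullet> d\<bar> \<le> L * t * (norm d)\<^sup>2" if "0 \<le> t" for t
  proof -
    have "\<bar>(G (x + t *\<^sub>R d) - G x) \<bullet> d\<bar> \<le> norm (G (x + t *\<^sub>R d) - G x) * norm d"
      by (rule Cauchy_Schwarz_ineq2)
    also have "norm (G (x + t *\<^sub>R d) - G x) \<le> L * (t * norm d)"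
      using lipschitz_onD[OF lip, of "x + t *\<^sub>R d" x] that by (simp add: dist_norm)
    hence "norm (G (x + t *\<^sub>R d) - G x) * norm d \<le> L * (t * norm d) * norm d"
      by (simp add: mult_right_mono)
    finally show ?thesis by (simp add: power2_eq_square mult.assoc)
  qed
  define u where "u t = g (x + t *\<^sub>R d) - t * (G x \<bullet> d) - L/2 * t\<^sup>2 * (norm d)\<^sup>2" for t
  define v where "v t = g (x + t *\<^sub>R d) - t * (G x \<bullet> d) + L/2 * t\<^sup>2 * (norm d)\<^sup>2" for t
  have "u 1 \<le> u 0"
  proof (rule DERIV_nonpos_imp_nonincreasing[of 0 1])
    fix t :: real assume t: "0 \<le> t" "t \<le> 1"
    have "DERIV u t :> G (x + t *\<^sub>R d) \<bullet> d - G x \<bullet> d - L * t * (norm d)\<^sup>2"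
      unfolding u_def by (rule derivative_eq_intros D | simp)+
    moreover have "G (x + t *\<^sub>R d) \<bullet> d - G x \<bullet> d - L * t * (norm d)\<^sup>2 \<le> 0"
      using B[OF t(1)] by (simp add: inner_diff_left)
    ultimately show "\<exists>y. DERIV u t :> y \<and> y \<le> 0" by blast
  qed simp
  moreover have "v 0 \<le> v 1"
  proof (rule DERIV_nonneg_imp_nondecreasing[of 0 1])
    fix t :: real assume t: "0 \<le> t" "t \<le> 1"
    have "DERIV v t :> G (x + t *\<^sub>R d) \<bullet> d - G x \<bullet> d + L * t * (norm d)\<^sup>2"
      unfolding v_def by (rule derivative_eq_intros D | simp)+
    moreover have "G (x + t *\<^sub>R d) \<bullet> d - G x \<bullet> d + L * t * (norm d)\<^sup>2 \<ge> 0"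
      using B[OF t(1)] by (simp add: inner_diff_left)
    ultimately show "\<exists>y. DERIV v t :> y \<and> y \<ge> 0" by blast
  qed simp
  ultimately have "g x - g y + G x \<bullet> (y - x) \<le> L/2 * (norm (y-x))\<^sup>2"
      "g y - g x - G x \<bullet> (y - x) \<le> L/2 * (norm (y-x))\<^sup>2"
    unfolding u_def v_def d_def by (simp_all add: algebra_simps)
  then show ?thesis unfolding abs_le_iff by linarith
qed

theorem lemma3p7:
  fixes g :: "'n::euclidean_space \<Rightarrow> real" and G :: "'n \<Rightarrow> 'n"
    and h :: "'n \<Rightarrow> 'd::euclidean_space \<Rightarrow> real"
    and xhat :: "'d \<Rightarrow> 'n"
    and f :: "'d \<Rightarrow> real" and F :: "'d \<Rightarrow> 'd"
    and Lg Lf lam \<eta> \<alpha> \<epsilon>k \<epsilon>k1 :: real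
    and \<theta>k \<theta>k1 zk :: 'd and xtk xtk1 :: 'n
  assumes g_grad: "\<And>x. (g has_derivative (\<lambda>v. G x \<bullet> v)) (at x)"
    and G_cont: "continuous_on UNIV G"
    and G_lip: "Lg-lipschitz_on UNIV G"
    and h_sc: "\<And>\<theta>. strongly_convex (\<lambda>x. h x \<theta>)"
    and xhat_min: "\<And>\<theta> x. h (xhat \<theta>) \<theta> \<le> h x \<theta>"
    and f_def: "\<And>\<theta>. f \<theta> = g (xhat \<theta>)"
    and f_grad: "\<And>\<theta>. (f has_derivative (\<lambda>v. F \<theta> \<bullet> v)) (at \<theta>)"
    and F_cont: "continuous_on UNIV F"
    and F_lip: "Lf-lipschitz_on UNIV F"
    and eta: "\<eta> \<le> 1"
    and err: "norm (zk - F \<theta>k) \<le> (1 - \<eta>) * norm zk"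
    and alpha_nonneg: "0 \<le> \<alpha>"
    and step: "\<theta>k1 = \<theta>k - \<alpha> *\<^sub>R zk"
    and eps_k: "0 \<le> \<epsilon>k" and eps_k1: "0 \<le> \<epsilon>k1"
    and approx_k: "norm (xtk - xhat \<theta>k) \<le> \<epsilon>k"
    and approx_k1: "norm (xtk1 - xhat \<theta>k1) \<le> \<epsilon>k1"
  shows "Ubar g G Lg xtk1 \<epsilon>k1 - Ulow g G Lg xtk \<epsilon>k + lam * \<alpha> * (norm zk)\<^sup>2
     \<le> 2 * (norm (G xtk) + norm (G xtk1)) * max \<epsilon>k \<epsilon>k1
       + 2 * Lg * (max \<epsilon>k \<epsilon>k1)\<^sup>2
       + (\<alpha>\<^sup>2 * Lf / 2 + (lam - \<eta>) * \<alpha>) * (norm zk)\<^sup>2"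
proof -
  have Lg0: "0 \<le> Lg" using lipschitz_on_nonneg[OF G_lip] .
  have d1: "\<bar>g (xhat \<theta>k1) - g xtk1 - G xtk1 \<bullet> (xhat \<theta>k1 - xtk1)\<bar> \<le> Lg/2 * (norm (xhat \<theta>k1 - xtk1))\<^sup>2"
    by (rule descent[OF g_grad G_lip])
  have d0: "\<bar>g (xhat \<theta>k) - g xtk - G xtk \<bullet> (xhat \<theta>k - xtk)\<bar> \<le> Lg/2 * (norm (xhat \<theta>k - xtk))\<^sup>2"
    by (rule descent[OF g_grad G_lip])
  have df: "\<bar>f \<theta>k1 - f \<theta>k - F \<theta>k \<bullet> (\<theta>k1 - \<theta>k)\<bar> \<le> Lf/2 * (norm (\<theta>k1 - \<theta>k))\<^sup>2"
    by (rule descent[OF f_grad F_lip])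
  have n1: "norm (xhat \<theta>k1 - xtk1) \<le> \<epsilon>k1" using approx_k1 by (simp add: norm_minus_commute)
  have n0: "norm (xhat \<theta>k - xtk) \<le> \<epsilon>k" using approx_k by (simp add: norm_minus_commute)
  have c1: "\<bar>G xtk1 \<bullet> (xhat \<theta>k1 - xtk1)\<bar> \<le> norm (G xtk1) * \<epsilon>k1"
    using Cauchy_Schwarz_ineq2[of "G xtk1" "xhat \<theta>k1 - xtk1"] n1
    by (meson mult_left_mono norm_ge_zero order_trans)
  have c0: "\<bar>G xtk \<bullet> (xhat \<theta>k - xtk)\<bar> \<le> norm (G xtk) * \<epsilon>k"
    using Cauchy_Schwarz_ineq2[of "G xtk" "xhat \<theta>k - xtk"] n0
    by (meson mult_left_mono norm_ge_zero order_trans)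
  have s1: "(norm (xhat \<theta>k1 - xtk1))\<^sup>2 \<le> \<epsilon>k1\<^sup>2" using n1 by (simp add: power_mono)
  have s0: "(norm (xhat \<theta>k - xtk))\<^sup>2 \<le> \<epsilon>k\<^sup>2" using n0 by (simp add: power_mono)
  have g1: "g xtk1 \<le> f \<theta>k1 + norm (G xtk1) * \<epsilon>k1 + Lg/2 * \<epsilon>k1\<^sup>2"
    using d1 c1 s1 Lg0 f_def[of \<theta>k1] mult_left_mono[OF s1, of "Lg/2"] unfolding abs_le_iff by auto
  have g0: "f \<theta>k - norm (G xtk) * \<epsilon>k - Lg/2 * \<epsilon>k\<^sup>2 \<le> g xtk"
    using d0 c0 s0 Lg0 f_def[of \<theta>k] mult_left_mono[OF s0, of "Lg/2"] unfolding abs_le_iff by auto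
  have Fz: "\<eta> * (norm zk)\<^sup>2 \<le> F \<theta>k \<bullet> zk"
  proof -
    have "\<bar>(zk - F \<theta>k) \<bullet> zk\<bar> \<le> (1 - \<eta>) * norm zk * norm zk"
      using Cauchy_Schwarz_ineq2[of "zk - F \<theta>k" zk] err
      by (meson mult_right_mono norm_ge_zero order_trans)
    moreover have "(zk - F \<theta>k) \<bullet> zk = (norm zk)\<^sup>2 - F \<theta>k \<bullet> zk"
      by (simp add: inner_diff_left power2_norm_eq_inner)
    ultimately show ?thesis unfolding abs_le_iff by (simp add: power2_eq_square algebra_simps)
  qed
  have fstep: "f \<theta>k1 - f \<theta>k \<le> \<alpha>\<^sup>2 * Lf / 2 * (norm zk)\<^sup>2 - \<alpha> * \<eta> * (norm zk)\<^sup>2"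
  proof -
    have "F \<theta>k \<bullet> (\<theta>k1 - \<theta>k) = - \<alpha> * (F \<theta>k \<bullet> zk)" using step by simp
    moreover have "(norm (\<theta>k1 - \<theta>k))\<^sup>2 = \<alpha>\<^sup>2 * (norm zk)\<^sup>2"
      using step alpha_nonneg by (simp add: power_mult_distrib)
    moreover have "\<alpha> * (\<eta> * (norm zk)\<^sup>2) \<le> \<alpha> * (F \<theta>k \<bullet> zk)"
      using Fz alpha_nonneg by (rule mult_left_mono)
    ultimately show ?thesis using df unfolding abs_le_iff by (simp add: algebra_simps)
  qed
  define m where "m = max \<epsilon>k \<epsilon>k1"
  have m0: "\<epsilon>k \<le> m" "\<epsilon>k1 \<le> m" unfolding m_def by auto
  have q: "norm (G xtk) * \<epsilon>k \<le> norm (G xtk) * m" "norm (G xtk1) * \<epsilon>k1 \<le> norm (G xtk1) * m"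
    using m0 by (simp_all add: mult_left_mono)
  have r: "Lg * \<epsilon>k\<^sup>2 \<le> Lg * m\<^sup>2" "Lg * \<epsilon>k1\<^sup>2 \<le> Lg * m\<^sup>2"
    using m0 eps_k eps_k1 Lg0 by (simp_all add: mult_left_mono power_mono)
  show ?thesis unfolding Ubar_def Ulow_def m_def[symmetric]
    using g1 g0 fstep q r eps_k eps_k1 by (simp add: algebra_simps)
qed

end
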